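(* Let $T\in L_{aut}(\mathcal B)$ be generalized hyperbolic with splitting $\mathcal B=E^-\oplus E^+$, and let $x\in\mathcal B$ satisfy $T^kx=x$ for some integer $k\ge1$. Then there is $v\in T^k(E^-)\cap E^+$ such that $x=\sum_{n\in\mathbb Z}T^{nk}v$, the series converging absolutely.
   Context: $\mathcal B$ is a Banach space. $T$ is generalized hyperbolic if there is a decomposition $\mathcal B=E^-\oplus E^+$ into complementary closed subspaces with $T(E^+)\subset E^+$, $T^{-1}(E^-)\subset E^-$, and $T|_{E^+}$, $T^{-1}|_{E^-}$ uniform contractions (there are $C\ge1$, $\lambda\in(0,1)$ with $|T^nx|\le C\lambda^n|x|$ on $E^+$ and $|T^{-n}x|\le C\lambda^n|x|$ on $E^-$ for $n\ge0$). *)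

theory Defs
  imports "HOL-Analysis.Analysis"
begin

definition L_aut :: "('a::banach \<Rightarrow> 'a) \<Rightarrow> bool" where
  "L_aut T \<longleftrightarrow> bounded_linear T \<and> bij T \<and> bounded_linear (inv T)"

definition zpow :: "('a \<Rightarrow> 'a) \<Rightarrow> int \<Rightarrow> 'a \<Rightarrow> 'a" where
  "zpow T n = (if 0 \<le> n then T ^^ nat n else inv T ^^ nat (- n))"

definition gen_hyperbolic_splitting ::
    "('a::banach \<Rightarrow> 'a) \<Rightarrow> 'a set \<Rightarrow> 'a set \<Rightarrow> bool" where
  "gen_hyperbolic_splitting T Em Ep \<longleftrightarrow>
     subspace Em \<and> subspace Ep \<and> closed Em \<and> closed Ep \<and>
     Em \<inter> Ep = {0} \<and> (\<forall>z. \<exists>a\<in>Em. \<exists>b\<in>Ep. z = a + b) \<and>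
     T ` Ep \<subseteq> Ep \<and> inv T ` Em \<subseteq> Em \<and>
     (\<exists>C lam. C \<ge> 1 \<and> 0 < lam \<and> lam < 1 \<and>
        (\<forall>n. \<forall>z\<in>Ep. norm ((T ^^ n) z) \<le> C * lam ^ n * norm z) \<and>
        (\<forall>n. \<forall>z\<in>Em. norm ((inv T ^^ n) z) \<le> C * lam ^ n * norm z))"

definition gen_hyperbolic :: "('a::banach \<Rightarrow> 'a) \<Rightarrow> bool" where
  "gen_hyperbolic T \<longleftrightarrow> (\<exists>Em Ep. gen_hyperbolic_splitting T Em Ep)"

end

theory Submission
  imports Defs
begin

lemma int_has_sum:
  fixes F :: "int \<Rightarrow> 'b::banach"
  assumes "summable (\<lambda>n. norm (F (int n)))" "(\<lambda>n. F (int n)) sums s1"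
    "summable (\<lambda>m. norm (F (- int (Suc m))))" "(\<lambda>m. F (- int (Suc m))) sums s2"
  shows "(F has_sum (s1 + s2)) UNIV"
proof -
  have 1: "(F has_sum s1) (range int)"
    using norm_summable_imp_has_sum[OF assms(1,2)]
    by (subst has_sum_reindex) (auto simp: o_def)
  have inj: "inj (\<lambda>m::nat. - int (Suc m))" by (auto simp: inj_def)
  have 2: "(F has_sum s2) (range (\<lambda>m::nat. - int (Suc m)))"
    using norm_summable_imp_has_sum[OF assms(3,4)]
    by (subst has_sum_reindex[OF inj]) (auto simp: o_def)
  have U: "range int \<union> range (\<lambda>m::nat. - int (Suc m)) = UNIV"
  proof -
    have "n \<in> range int \<union> range (\<lambda>m::nat. - int (Suc m))" for n :: int
    proof (cases "0 \<le> n")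
      case True
      hence "n = int (nat n)" by simp
      thus ?thesis by blast
    next
      case False
      hence "n = - int (Suc (nat (- n - 1)))" by simp
      thus ?thesis by blast
    qed
    thus ?thesis by blast
  qed
  have D: "range int \<inter> range (\<lambda>m::nat. - int (Suc m)) = {}" by auto
  show ?thesis using has_sum_Un_disjoint[OF 1 2 D] U by simp
qed

lemma linear_funpow: "linear (f::'a::real_vector\<Rightarrow>'a) \<Longrightarrow> linear (f ^^ n)"
proof (induction n)
  case 0 thus ?case using linear_id by (simp add: id_def)
next
  case (Suc n) thus ?case using linear_compose[of "f ^^ n" f] by (simp add: o_def)
qed

lemma funpow_pres: "(f::'a\<Rightarrow>'a) ` A \<subseteq> A \<Longrightarrow> y \<in> A \<Longrightarrow> (f ^^ n) y \<in> A"
  by (induction n) auto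

lemma funpow_inv_cancel: "(\<And>y. (g::'a\<Rightarrow>'a) (f y) = y) \<Longrightarrow> (g ^^ n) ((f ^^ n) y) = y"
proof (induction n arbitrary: y)
  case 0 thus ?case by simp
next
  case (Suc n)
  have "(g ^^ Suc n) ((f ^^ Suc n) y) = (g ^^ n) (g (f ((f ^^ n) y)))"
  proof -
    have e1: "g ^^ Suc n = g ^^ n \<circ> g" by (rule funpow_Suc_right)
    have e2: "f ^^ Suc n = f \<circ> f ^^ n" by simp
    show ?thesis unfolding e1 e2 by simp
  qed
  thus ?case using Suc by simp
qed

theorem mainTheorem19:
  fixes T :: "'a::banach \<Rightarrow> 'a" and Em Ep :: "'a set" and x :: 'a and k :: nat
  assumes "L_aut T"
    and "gen_hyperbolic_splitting T Em Ep"
    and "k \<ge> 1"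
    and "(T ^^ k) x = x"
  shows "\<exists>v \<in> (T ^^ k) ` Em \<inter> Ep.
           (\<lambda>n::int. norm (zpow T (n * int k) v)) summable_on UNIV \<and>
           ((\<lambda>n::int. zpow T (n * int k) v) has_sum x) UNIV"
proof -
  have blT: "bounded_linear T" and bij: "bij T" and blI: "bounded_linear (inv T)"
    using assms(1) by (auto simp: L_aut_def)
  have IT: "inv T (T y) = y" for y using bij by (simp add: bij_is_inj)
  have TI: "T (inv T y) = y" for y using bij by (simp add: bij_is_surj surj_f_inv_f)
  have sEm: "subspace Em" and sEp: "subspace Ep" and TEp: "T ` Ep \<subseteq> Ep"
    and IEm: "inv T ` Em \<subseteq> Em" and dec: "\<forall>z. \<exists>a\<in>Em. \<exists>b\<in>Ep. z = a + b"
    and ex: "\<exists>C lam. C \<ge> 1 \<and> 0 < lam \<and> lam < 1 \<and>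
        (\<forall>n. \<forall>z\<in>Ep. norm ((T ^^ n) z) \<le> C * lam ^ n * norm z) \<and>
        (\<forall>n. \<forall>z\<in>Em. norm ((inv T ^^ n) z) \<le> C * lam ^ n * norm z)"
    using assms(2) unfolding gen_hyperbolic_splitting_def by simp_all
  from ex obtain C lam where C: "C \<ge> 1" "0 < lam" "lam < 1"
    and cp0: "\<forall>n. \<forall>z\<in>Ep. norm ((T ^^ n) z) \<le> C * lam ^ n * norm z"
    and cm0: "\<forall>n. \<forall>z\<in>Em. norm ((inv T ^^ n) z) \<le> C * lam ^ n * norm z"
    by blast
  have cp: "\<And>n z. z \<in> Ep \<Longrightarrow> norm ((T ^^ n) z) \<le> C * lam ^ n * norm z" using cp0 by blast
  have cm: "\<And>n z. z \<in> Em \<Longrightarrow> norm ((inv T ^^ n) z) \<le> C * lam ^ n * norm z" using cm0 by blast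
  from dec obtain a b where a: "a \<in> Em" and b: "b \<in> Ep" and xab: "x = a + b"
    by blast
  define S where "S = T ^^ k"
  define R where "R = inv T ^^ k"
  have linT: "linear (T ^^ n)" for n using linear_funpow blT bounded_linear.linear by blast
  have linI: "linear (inv T ^^ n)" for n using linear_funpow blI bounded_linear.linear by blast
  have RS: "R (S y) = y" for y unfolding R_def S_def by (rule funpow_inv_cancel[where g="inv T" and f=T, OF IT])
  have SR: "S (R y) = y" for y unfolding R_def S_def by (rule funpow_inv_cancel[where f="inv T" and g=T, OF TI])
  have SaSb: "S a + S b = a + b"
  proof -
    have "S (a + b) = S a + S b" unfolding S_def by (rule linear_add[OF linT])
    thus ?thesis using assms(4) unfolding xab S_def by simp
  qed
  define v where "v = b - S b"
  have v2: "v = S a - a" using SaSb unfolding v_def by (simp add: algebra_simps)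
  define w where "w = a - R a"
  have wEm: "w \<in> Em" unfolding w_def R_def
    using a funpow_pres[OF IEm a] sEm by (simp add: subspace_diff)
  have Sw: "S w = v"
  proof -
    have "S (a - R a) = S a - S (R a)" unfolding S_def by (rule linear_diff[OF linT])
    thus ?thesis unfolding w_def v2 SR by simp
  qed
  have vEp: "v \<in> Ep" unfolding v_def S_def using b funpow_pres[OF TEp b] sEp
    by (simp add: subspace_diff)
  have lk: "0 \<le> lam ^ k" "lam ^ k < 1"
    using C assms(3) power_strict_decreasing[of 0 k lam] by auto
  have pk: "lam ^ (j*k) = (lam ^ k) ^ j" for j
    by (metis power_mult mult.commute)
  have geo0: "(\<lambda>j. D * (lam ^ k) ^ j) \<longlonglongrightarrow> 0" for D
    using LIMSEQ_power_zero[of "lam ^ k"] lk tendsto_mult_left[of _ 0] by fastforce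
  have geoS: "summable (\<lambda>j. D * (lam ^ k) ^ j)" for D
    using lk by (intro summable_mult summable_geometric) auto
  define g where "g j = (T ^^ (j * k)) b" for j
  have fpos: "zpow T (int j * int k) v = g j - g (Suc j)" for j
  proof -
    have "zpow T (int j * int k) v = (T ^^ (j*k)) v"
      unfolding zpow_def by (simp add: of_nat_mult[symmetric] del: of_nat_mult)
    also have "\<dots> = g j - (T ^^ (j*k)) (S b)" unfolding v_def g_def
      by (rule linear_diff[OF linT])
    also have "(T ^^ (j*k)) (S b) = g (Suc j)"
    proof -
      have "(T ^^ (j*k)) ((T ^^ k) b) = (T ^^ (j*k + k)) b" by (simp only: funpow_add o_apply)
      moreover have "j*k + k = Suc j * k" by simp
      ultimately show ?thesis unfolding g_def S_def by simp
    qed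
    finally show ?thesis .
  qed
  have gb: "norm (g j) \<le> C * norm b * (lam ^ k) ^ j" for j
    using cp[OF b, of "j*k"] pk[of j] by (simp add: g_def mult_ac)
  have g0: "g \<longlonglongrightarrow> 0"
    by (rule Lim_null_comparison[OF _ geo0[of "C * norm b"]]) (use gb in auto)
  have s1: "(\<lambda>j. zpow T (int j * int k) v) sums b"
    using telescope_sums'[OF g0] unfolding fpos by (simp add: g_def)
  have n1: "norm (zpow T (int j * int k) v) \<le> C * norm v * (lam ^ k) ^ j" for j
  proof -
    have "zpow T (int j * int k) v = (T ^^ (j*k)) v"
      unfolding zpow_def by (simp add: of_nat_mult[symmetric] del: of_nat_mult)
    thus ?thesis using cp[OF vEp, of "j*k"] pk[of j] by (simp add: mult_ac)
  qed
  have ns1: "summable (\<lambda>j. norm (zpow T (int j * int k) v))"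
    by (rule summable_comparison_test'[OF geoS[of "C * norm v"]]) (use n1 in auto)
  define h where "h m = (inv T ^^ (m * k)) a" for m
  have zneg: "zpow T (- int (Suc m) * int k) v = (inv T ^^ (Suc m * k)) v" for m
  proof -
    have "- int (Suc m) * int k = - int (Suc m * k)" by (simp add: algebra_simps)
    moreover have "\<not> 0 \<le> - int (Suc m * k)"
    proof -
      have "0 < Suc m * k" using assms(3) by simp
      hence "0 < int (Suc m * k)" by (simp only: of_nat_0_less_iff)
      thus ?thesis by linarith
    qed
    ultimately show ?thesis unfolding zpow_def by (simp only: if_not_P if_False minus_minus nat_int)
  qed
  have Ssplit: "(inv T ^^ (Suc m * k)) (S y) = (inv T ^^ (m * k)) y" for m y
  proof -
    have e: "Suc m * k = m * k + k" by simp
    have "(inv T ^^ (Suc m * k)) (S y) = (inv T ^^ (m * k)) (R (S y))"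
      unfolding R_def e by (simp only: funpow_add o_apply)
    thus ?thesis using RS by simp
  qed
  have fneg: "zpow T (- int (Suc m) * int k) v = h m - h (Suc m)" for m
  proof -
    have "zpow T (- int (Suc m) * int k) v = (inv T ^^ (Suc m * k)) (S a) - h (Suc m)"
      unfolding zneg unfolding v2 h_def by (rule linear_diff[OF linI])
    thus ?thesis using Ssplit h_def by simp
  qed
  have hb: "norm (h j) \<le> C * norm a * (lam ^ k) ^ j" for j
    using cm[OF a, of "j*k"] pk[of j] by (simp add: h_def mult_ac)
  have h0: "h \<longlonglongrightarrow> 0"
    by (rule Lim_null_comparison[OF _ geo0[of "C * norm a"]]) (use hb in auto)
  have s2: "(\<lambda>m. zpow T (- int (Suc m) * int k) v) sums a"
    using telescope_sums'[OF h0] unfolding fneg by (simp add: h_def)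
  have n2: "norm (zpow T (- int (Suc m) * int k) v) \<le> C * norm w * (lam ^ k) ^ m" for m
  proof -
    have "zpow T (- int (Suc m) * int k) v = (inv T ^^ (m*k)) w"
      using zneg Ssplit[of m w] Sw by simp
    thus ?thesis using cm[OF wEm, of "m*k"] pk[of m] by (simp add: mult_ac)
  qed
  have ns2: "summable (\<lambda>m. norm (zpow T (- int (Suc m) * int k) v))"
    by (rule summable_comparison_test'[OF geoS[of "C * norm w"]]) (use n2 in auto)
  have HS: "((\<lambda>n::int. zpow T (n * int k) v) has_sum x) UNIV"
    using int_has_sum[of "\<lambda>n. zpow T (n * int k) v", OF ns1 s1 ns2 s2] xab
    by (simp add: add.commute)
  have NS: "(\<lambda>n::int. norm (zpow T (n * int k) v)) summable_on UNIV"
    using int_has_sum[of "\<lambda>n. norm (zpow T (n * int k) v)", OF _ summable_sums[OF ns1] _ summable_sums[OF ns2]]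
      ns1 ns2 has_sum_imp_summable by simp
  have "v \<in> (T ^^ k) ` Em" using Sw wEm unfolding S_def by blast
  with vEp NS HS show ?thesis by blast
qed

end
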